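(* Let $G$ be a group of order $N$, let $d\geqslant 2$ be an integer, let $x\in G\setminus\{1\}$ and let $1\leqslant i\leqslant d-1$. The number of ordered pairs $(e,f)$ of $d$-edges of $\Gamma_x$ with $|e\cap f|=i$ is at most $2^{2d}\binom{d}{i}^2 i!\,N^{2d-i-2}$.
   Context: For a group $G$, an integer $d\geqslant 2$ and $x\in G\setminus\{1\}$, $\Gamma_x$ is the hypergraph with vertex set $G\setminus\{1\}$ whose edges are the subsets $E\subseteq G\setminus\{1\}$ for which there exist an integer $\ell$ with $|E|\leqslant\ell\leqslant d$, elements $h_1,\ldots,h_\ell\in E$ (not necessarily distinct) and signs $a_1,\ldots,a_\ell\in\{-1,1\}$ such that every element of $E$ appears at least once among $h_1,\ldots,h_\ell$ and $h_1^{a_1}\cdots h_\ell^{a_\ell}=x$. An edge $E$ with $|E|=k$ is called a $k$-edge. *)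

theory Defs
  imports "HOL-Algebra.Group"
begin

text \<open>Evaluation of a signed word h_1^{a_1} ... h_l^{a_l}: a list of pairs (h, s),
  where s = True means exponent +1 and s = False means exponent -1.\<close>
fun word_eval :: "('a, 'b) monoid_scheme \<Rightarrow> ('a \<times> bool) list \<Rightarrow> 'a" where
  "word_eval G [] = \<one>\<^bsub>G\<^esub>"
| "word_eval G ((h, s) # ws) =
     (if s then h else inv\<^bsub>G\<^esub> h) \<otimes>\<^bsub>G\<^esub> word_eval G ws"

definition is_edge :: "('a, 'b) monoid_scheme \<Rightarrow> nat \<Rightarrow> 'a \<Rightarrow> 'a set \<Rightarrow> bool" where
  "is_edge G d x E \<longleftrightarrow>
     E \<subseteq> carrier G - {\<one>\<^bsub>G\<^esub>} \<and>
     (\<exists>ws. card E \<le> length ws \<and> length ws \<le> d \<and>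
           fst ` set ws = E \<and> word_eval G ws = x)"

end

theory Submission
  imports Defs "HOL-Library.FuncSet"
begin

definition Wd :: "('a, 'b) monoid_scheme \<Rightarrow> nat \<Rightarrow> 'a \<Rightarrow> ('a \<times> bool) list set" where
  "Wd G d x = {ws. length ws = d \<and> distinct (map fst ws) \<and> fst ` set ws \<subseteq> carrier G
                 \<and> word_eval G ws = x}"

lemma word_eval_closed:
  assumes "group G" "fst ` set ws \<subseteq> carrier G"
  shows "word_eval G ws \<in> carrier G"
  using assms(2)
proof (induction ws)
  case Nil then show ?case using assms(1) by (simp add: group.is_monoid monoid.one_closed)
next
  case (Cons a ws)
  obtain h s where a: "a = (h, s)" by fastforce
  have h: "h \<in> carrier G" using Cons.prems a by auto
  have "word_eval G ws \<in> carrier G" using Cons by auto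
  then show ?case using a h assms(1)
    by (auto simp: group.inv_closed monoid.m_closed group.is_monoid)
qed

lemma word_eval_cancel:
  assumes G: "group G"
  shows "fst ` set ws1 \<subseteq> carrier G \<Longrightarrow> fst ` set ws2 \<subseteq> carrier G \<Longrightarrow>
    length ws1 = length ws2 \<Longrightarrow> p < length ws1 \<Longrightarrow>
    (\<forall>j<length ws1. j \<noteq> p \<longrightarrow> ws1 ! j = ws2 ! j) \<Longrightarrow> snd (ws1 ! p) = snd (ws2 ! p) \<Longrightarrow>
    word_eval G ws1 = word_eval G ws2 \<Longrightarrow> ws1 = ws2"
proof (induction ws1 arbitrary: ws2 p)
  case Nil then show ?case by simp
next
  case (Cons a as)
  obtain b bs where b: "ws2 = b # bs" using Cons.prems(3) by (cases ws2) auto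
  obtain h s where a: "a = (h, s)" by fastforce
  obtain h' s' where b': "b = (h', s')" by fastforce
  have h: "h \<in> carrier G" "h' \<in> carrier G" using Cons.prems(1,2) a b b' by auto
  have c1: "word_eval G as \<in> carrier G" using Cons.prems(1) G word_eval_closed by auto
  have c2: "word_eval G bs \<in> carrier G" using Cons.prems(2) b G word_eval_closed by auto
  have len: "length as = length bs" using Cons.prems(3) b by simp
  show ?case
  proof (cases p)
    case 0
    have asbs: "as = bs"
    proof (rule nth_equalityI)
      show "length as = length bs" by fact
      fix j assume "j < length as"
      then show "as ! j = bs ! j" using Cons.prems(5)[rule_format, of "Suc j"] b 0 by simp
    qed
    have ss: "s = s'" using Cons.prems(6) 0 a b b' by simp
    have eq: "(if s then h else inv\<^bsub>G\<^esub> h) \<otimes>\<^bsub>G\<^esub> word_eval G as =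
              (if s then h' else inv\<^bsub>G\<^esub> h') \<otimes>\<^bsub>G\<^esub> word_eval G as"
      using Cons.prems(7) a b b' ss asbs by simp
    have "(if s then h else inv\<^bsub>G\<^esub> h) = (if s then h' else inv\<^bsub>G\<^esub> h')"
      using group.right_cancel[OF G c1, of "(if s then h else inv\<^bsub>G\<^esub> h)" "(if s then h' else inv\<^bsub>G\<^esub> h')"] eq h G
      by (auto simp: group.inv_closed)
    then have "h = h'" using h G by (auto split: if_splits dest: group.inv_inj[THEN inj_onD, rotated])
    then show ?thesis using a b b' ss asbs by simp
  next
    case (Suc q)
    have ab: "a = b" using Cons.prems(5)[rule_format, of 0] b Suc by simp
    have eq: "word_eval G as = word_eval G bs"
    proof -
      have "(if s then h else inv\<^bsub>G\<^esub> h) \<otimes>\<^bsub>G\<^esub> word_eval G as =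
              (if s then h else inv\<^bsub>G\<^esub> h) \<otimes>\<^bsub>G\<^esub> word_eval G bs"
        using Cons.prems(7) a b b' ab by simp
      then show ?thesis
        using G h c1 c2 by (metis group.inv_closed group.Units_eq monoid.Units_l_cancel group.is_monoid)
    qed
    have "as = bs"
    proof (rule Cons.IH[of bs q])
      show "fst ` set as \<subseteq> carrier G" using Cons.prems(1) by auto
      show "fst ` set bs \<subseteq> carrier G" using Cons.prems(2) b by auto
      show "length as = length bs" by fact
      show "q < length as" using Cons.prems(4) Suc by simp
      show "\<forall>j<length as. j \<noteq> q \<longrightarrow> as ! j = bs ! j"
        using Cons.prems(5) b Suc by auto
      show "snd (as ! q) = snd (bs ! q)" using Cons.prems(6) b Suc by simp
      show "word_eval G as = word_eval G bs" by fact
    qed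
    then show ?thesis using ab b by simp
  qed
qed

lemma falling_eq: "prod ((-) c) {0..<i} = (c choose i) * fact i" for c i :: nat
proof (induction i)
  case 0 then show ?case by simp
next
  case (Suc i)
  have "(c choose Suc i) * Suc i = (c choose i) * (c - i)"
    by (metis binomial_absorb_comp binomial_absorption mult.commute)
  then have "(c choose Suc i) * fact (Suc i) = (c choose i) * fact i * (c - i)"
    by (metis fact_Suc mult.assoc mult.commute of_nat_id)
  then show ?case using Suc by simp
qed


lemma finite_Wd:
  assumes "finite (carrier G)"
  shows "finite (Wd G d x)"
proof -
  have "Wd G d x \<subseteq> {ws. set ws \<subseteq> carrier G \<times> (UNIV :: bool set) \<and> length ws = d}"
    unfolding Wd_def by force
  moreover have "finite {ws. set ws \<subseteq> carrier G \<times> (UNIV :: bool set) \<and> length ws = d}"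
    using assms by (intro finite_lists_length_eq) auto
  ultimately show ?thesis by (rule finite_subset)
qed

lemma countB:
  assumes G: "group G" and fin: "finite (carrier G)" and finE: "finite E" and id: "i < d"
  shows "card {wf \<in> Wd G d x. card (E \<inter> fst ` set wf) = i}
         \<le> 2 ^ d * (d choose i) * ((card E choose i) * fact i) * card (carrier G) ^ (d - i - 1)"
proof -
  define S where "S = {wf \<in> Wd G d x. card (E \<inter> fst ` set wf) = i}"
  define Tof where "Tof wf = {j. j < d \<and> fst (wf ! j) \<in> E}" for wf :: "('a \<times> bool) list"
  define pT where "pT T = Max ({..<d} - T)" for T :: "nat set"
  define R where "R T = {..<d} - T - {pT T}" for T
  define Ts where "Ts = {T. T \<subseteq> {..<d} \<and> card T = i}"
  define \<Phi> where "\<Phi> wf = (map snd wf, Tof wf, restrict (\<lambda>j. fst (wf ! j)) (Tof wf),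
                            restrict (\<lambda>j. fst (wf ! j)) (R (Tof wf)))" for wf
  define D where "D = {ss. set ss \<subseteq> (UNIV :: bool set) \<and> length ss = d} \<times>
        Sigma Ts (\<lambda>T. {g \<in> T \<rightarrow>\<^sub>E E. inj_on g T} \<times> (R T \<rightarrow>\<^sub>E carrier G))"
  have pT: "pT T < d" "pT T \<notin> T" if "T \<in> Ts" for T
  proof -
    have "card T < card {..<d}" and sub: "T \<subseteq> {..<d}" using that id by (auto simp: Ts_def)
    then have "{..<d} - T \<noteq> {}" by (metis Diff_eq_empty_iff less_irrefl subset_antisym)
    then have "pT T \<in> {..<d} - T" unfolding pT_def by (intro Max_in) auto
    then show "pT T < d" "pT T \<notin> T" by auto
  qed
  have cardR: "card (R T) = d - i - 1" if "T \<in> Ts" for T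
  proof -
    have "card ({..<d} - T) = d - i" using that unfolding Ts_def
      by (metis (mono_tags, lifting) card_Diff_subset card_lessThan finite_lessThan finite_subset mem_Collect_eq)
    then show ?thesis unfolding R_def using pT[OF that] by (simp add: card_Diff_singleton)
  qed
  have TofTs: "Tof wf \<in> Ts" if "wf \<in> S" for wf
  proof -
    have len: "length wf = d" and dist: "distinct (map fst wf)" and ci: "card (E \<inter> fst ` set wf) = i"
      using that by (auto simp: S_def Wd_def)
    have "bij_betw (\<lambda>j. fst (wf ! j)) (Tof wf) (E \<inter> fst ` set wf)"
    proof (rule bij_betw_imageI)
      show "inj_on (\<lambda>j. fst (wf ! j)) (Tof wf)"
        using dist len by (auto simp: inj_on_def Tof_def distinct_conv_nth)
      show "(\<lambda>j. fst (wf ! j)) ` Tof wf = E \<inter> fst ` set wf"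
      proof (intro equalityI subsetI)
        fix y assume "y \<in> (\<lambda>j. fst (wf ! j)) ` Tof wf"
        then obtain j where "j < d" "fst (wf ! j) \<in> E" "y = fst (wf ! j)" by (auto simp: Tof_def)
        then show "y \<in> E \<inter> fst ` set wf" using len by (auto intro!: imageI nth_mem)
      next
        fix y assume "y \<in> E \<inter> fst ` set wf"
        then obtain z where "z \<in> set wf" "y = fst z" "y \<in> E" by auto
        then obtain j where "j < d" "wf ! j = z" using len by (auto simp: in_set_conv_nth)
        then show "y \<in> (\<lambda>j. fst (wf ! j)) ` Tof wf" using \<open>y = fst z\<close> \<open>y \<in> E\<close>
          by (auto simp: Tof_def)
      qed
    qed
    then have "card (Tof wf) = i" using ci bij_betw_same_card by metis
    then show ?thesis by (auto simp: Ts_def Tof_def)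
  qed
  have img: "\<Phi> ` S \<subseteq> D"
  proof
    fix y assume "y \<in> \<Phi> ` S"
    then obtain wf where wf: "wf \<in> S" and y: "y = \<Phi> wf" by auto
    have len: "length wf = d" and dist: "distinct (map fst wf)" and car: "fst ` set wf \<subseteq> carrier G"
      using wf by (auto simp: S_def Wd_def)
    have "restrict (\<lambda>j. fst (wf ! j)) (Tof wf) \<in> Tof wf \<rightarrow>\<^sub>E E" by (auto simp: Tof_def)
    moreover have "inj_on (restrict (\<lambda>j. fst (wf ! j)) (Tof wf)) (Tof wf)"
      using dist len by (auto simp: inj_on_def Tof_def distinct_conv_nth)
    moreover have "restrict (\<lambda>j. fst (wf ! j)) (R (Tof wf)) \<in> R (Tof wf) \<rightarrow>\<^sub>E carrier G"
      using car len by (auto simp: R_def intro!: nth_mem)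
    ultimately show "y \<in> D" using TofTs[OF wf] len by (simp add: y D_def \<Phi>_def)
  qed
  have inj: "inj_on \<Phi> S"
  proof
    fix w1 w2 assume w1: "w1 \<in> S" and w2: "w2 \<in> S" and eq: "\<Phi> w1 = \<Phi> w2"
    have len1: "length w1 = d" and car1: "fst ` set w1 \<subseteq> carrier G" and ev1: "word_eval G w1 = x"
      using w1 by (auto simp: S_def Wd_def)
    have len2: "length w2 = d" and car2: "fst ` set w2 \<subseteq> carrier G" and ev2: "word_eval G w2 = x"
      using w2 by (auto simp: S_def Wd_def)
    have sn: "map snd w1 = map snd w2" and T: "Tof w1 = Tof w2"
      and f1: "restrict (\<lambda>j. fst (w1 ! j)) (Tof w1) = restrict (\<lambda>j. fst (w2 ! j)) (Tof w1)"
      and f2: "restrict (\<lambda>j. fst (w1 ! j)) (R (Tof w1)) = restrict (\<lambda>j. fst (w2 ! j)) (R (Tof w1))"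
      using eq by (auto simp: \<Phi>_def)
    define p where "p = pT (Tof w1)"
    have p: "p < d" "p \<notin> Tof w1" using pT[OF TofTs[OF w1]] by (auto simp: p_def)
    have snd_eq: "snd (w1 ! j) = snd (w2 ! j)" if "j < d" for j
      using sn that len1 len2 by (metis nth_map)
    have agree: "\<forall>j<length w1. j \<noteq> p \<longrightarrow> w1 ! j = w2 ! j"
    proof (intro allI impI)
      fix j assume j: "j < length w1" "j \<noteq> p"
      have "fst (w1 ! j) = fst (w2 ! j)"
      proof (cases "j \<in> Tof w1")
        case True then show ?thesis using fun_cong[OF f1, of j] by simp
      next
        case False
        then have "j \<in> R (Tof w1)" using j len1 by (auto simp: R_def p_def)
        then show ?thesis using fun_cong[OF f2, of j] by simp
      qed
      then show "w1 ! j = w2 ! j" using snd_eq[of j] j len1 by (simp add: prod_eq_iff)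
    qed
    show "w1 = w2"
      using word_eval_cancel[OF G car1 car2 _ _ agree] len1 len2 p snd_eq ev1 ev2 by simp
  qed
  have fTs: "finite Ts" unfolding Ts_def by (rule finite_subset[of _ "Pow {..<d}"]) auto
  have fTT: "\<forall>T\<in>Ts. finite ({g \<in> T \<rightarrow>\<^sub>E E. inj_on g T} \<times> (R T \<rightarrow>\<^sub>E carrier G))"
  proof
    fix T assume "T \<in> Ts"
    then have fT: "finite T" unfolding Ts_def by (auto intro: finite_subset[of _ "{..<d}"])
    have "finite (T \<rightarrow>\<^sub>E E)" using fT finE by (rule finite_PiE)
    then have "finite {g \<in> T \<rightarrow>\<^sub>E E. inj_on g T}" by simp
    moreover have "finite (R T \<rightarrow>\<^sub>E carrier G)" using fin by (intro finite_PiE) (auto simp: R_def)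
    ultimately show "finite ({g \<in> T \<rightarrow>\<^sub>E E. inj_on g T} \<times> (R T \<rightarrow>\<^sub>E carrier G))" by simp
  qed
  have finD: "finite D" unfolding D_def
  proof (rule finite_cartesian_product)
    show "finite {ss. set ss \<subseteq> (UNIV :: bool set) \<and> length ss = d}"
      by (rule finite_lists_length_eq) simp
    show "finite (Sigma Ts (\<lambda>T. {g \<in> T \<rightarrow>\<^sub>E E. inj_on g T} \<times> (R T \<rightarrow>\<^sub>E carrier G)))"
      by (rule finite_SigmaI[OF fTs]) (use fTT in blast)
  qed
  have "card S = card (\<Phi> ` S)" using inj by (simp add: card_image)
  also have "\<dots> \<le> card D" using img finD by (rule card_mono[rotated])
  also have "card D = 2 ^ d * (\<Sum>T\<in>Ts. card ({g \<in> T \<rightarrow>\<^sub>E E. inj_on g T} \<times> (R T \<rightarrow>\<^sub>E carrier G)))"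
  proof -
    note fTs fTT
    moreover have "card {ss. set ss \<subseteq> (UNIV :: bool set) \<and> length ss = d} = 2 ^ d"
      using card_lists_length_eq[of "UNIV :: bool set" d] by simp
    ultimately show ?thesis unfolding D_def
      by (simp only: card_cartesian_product card_SigmaI)
  qed
  also have "\<dots> = 2 ^ d * (\<Sum>T\<in>Ts. ((card E choose i) * fact i) * card (carrier G) ^ (d - i - 1))"
  proof -
    have "card ({g \<in> T \<rightarrow>\<^sub>E E. inj_on g T} \<times> (R T \<rightarrow>\<^sub>E carrier G)) =
          ((card E choose i) * fact i) * card (carrier G) ^ (d - i - 1)" if "T \<in> Ts" for T
    proof -
      have fT: "finite T" and cT: "card T = i" using that unfolding Ts_def
        by (auto intro: finite_subset[of _ "{..<d}"])
      have fR: "finite (R T)" unfolding R_def by auto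
      have "card {g \<in> T \<rightarrow>\<^sub>E E. inj_on g T} = card E ^ (card T - card T) * prod ((-) (card E)) {0..<card T}"
        using card_inj_on_subset_funcset[OF fT finE, of T] by simp
      also have "\<dots> = (card E choose i) * fact i" using cT falling_eq by simp
      finally show ?thesis using cardR[OF that] fR
        by (simp add: card_cartesian_product card_funcsetE)
    qed
    then show ?thesis by simp
  qed
  also have "\<dots> = 2 ^ d * (d choose i) * ((card E choose i) * fact i) * card (carrier G) ^ (d - i - 1)"
    by (simp add: Ts_def n_subsets)
  finally show ?thesis unfolding S_def .
qed


lemma edge_word:
  assumes "is_edge G d x e" "card e = d"
  shows "\<exists>ws \<in> Wd G d x. fst ` set ws = e"
proof -
  obtain ws where ws: "card e \<le> length ws" "length ws \<le> d" "fst ` set ws = e" "word_eval G ws = x"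
    and sub: "e \<subseteq> carrier G - {\<one>\<^bsub>G\<^esub>}"
    using assms(1) unfolding is_edge_def by blast
  have len: "length ws = d" using ws assms(2) by simp
  have "card (set (map fst ws)) = length (map fst ws)" using ws(3) len assms(2) by simp
  then have "distinct (map fst ws)" by (rule card_distinct)
  then show ?thesis using ws sub len unfolding Wd_def by auto
qed

theorem lemma15:
  fixes G :: "('a, 'b) monoid_scheme" and N d i :: nat and x :: 'a
  assumes "group G" and "finite (carrier G)" and "N = card (carrier G)"
    and "d \<ge> 2" and "x \<in> carrier G" and "x \<noteq> \<one>\<^bsub>G\<^esub>"
    and "1 \<le> i" and "i \<le> d - 1"
  shows "card {(e, f). is_edge G d x e \<and> is_edge G d x f \<and> card e = d \<and> card f = d
                 \<and> card (e \<inter> f) = i}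
         \<le> 2 ^ (2 * d) * (d choose i) ^ 2 * fact i * N ^ (2 * d - i - 2)"
proof -
  let ?P = "{(e, f). is_edge G d x e \<and> is_edge G d x f \<and> card e = d \<and> card f = d
                 \<and> card (e \<inter> f) = i}"
  let ?B = "\<lambda>a. {b \<in> Wd G d x. card (fst ` set a \<inter> fst ` set b) = i}"
  define W where "W = Sigma (Wd G d x) ?B"
  have fW: "finite (Wd G d x)" using assms(2) by (rule finite_Wd)
  have finW: "finite W" unfolding W_def using fW by (intro finite_SigmaI) auto
  have id: "i < d" using assms(4,8) by simp
  have "?P \<subseteq> (\<lambda>(a, b). (fst ` set a, fst ` set b)) ` W"
  proof
    fix p assume "p \<in> ?P"
    then obtain e f where p: "p = (e, f)" and ee: "is_edge G d x e" and ef: "is_edge G d x f"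
      and ce: "card e = d" and cf: "card f = d" and cef: "card (e \<inter> f) = i" by auto
    obtain a where a: "a \<in> Wd G d x" "fst ` set a = e" using edge_word[OF ee ce] by blast
    obtain b where b: "b \<in> Wd G d x" "fst ` set b = f" using edge_word[OF ef cf] by blast
    have "(a, b) \<in> W" unfolding W_def using a b cef by auto
    then show "p \<in> (\<lambda>(a, b). (fst ` set a, fst ` set b)) ` W" using a b p by force
  qed
  then have "card ?P \<le> card ((\<lambda>(a, b). (fst ` set a, fst ` set b)) ` W)"
    using finW by (intro card_mono) auto
  also have "\<dots> \<le> card W" using finW by (rule card_image_le)
  also have "card W = (\<Sum>a\<in>Wd G d x. card (?B a))" unfolding W_def
    using fW by (intro card_SigmaI) auto
  also have "\<dots> \<le> (\<Sum>a\<in>Wd G d x. 2 ^ d * (d choose i) * ((d choose i) * fact i) * N ^ (d - i - 1))"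
  proof (rule sum_mono)
    fix a assume a: "a \<in> Wd G d x"
    have "card (fst ` set a) = d"
      using a unfolding Wd_def by (metis (mono_tags, lifting) distinct_card length_map list.set_map mem_Collect_eq)
    then show "card (?B a) \<le> 2 ^ d * (d choose i) * ((d choose i) * fact i) * N ^ (d - i - 1)"
      using countB[OF assms(1,2) _ id, of "fst ` set a" x] assms(3) by simp
  qed
  also have "\<dots> = card (Wd G d x) * (2 ^ d * (d choose i) * ((d choose i) * fact i) * N ^ (d - i - 1))"
    by simp
  also have "\<dots> \<le> (2 ^ d * N ^ (d - 1)) * (2 ^ d * (d choose i) * ((d choose i) * fact i) * N ^ (d - i - 1))"
  proof (rule mult_right_mono)
    have "Wd G d x = {wf \<in> Wd G d x. card ({} \<inter> fst ` set wf) = 0}" by simp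
    then have "card (Wd G d x) = card {wf \<in> Wd G d x. card ({} \<inter> fst ` set wf) = 0}" by simp
    also have "\<dots> \<le> 2 ^ d * N ^ (d - 1)"
      using countB[OF assms(1,2), of "{}" 0 d x] id assms(3) by simp
    finally show "card (Wd G d x) \<le> 2 ^ d * N ^ (d - 1)" .
  qed simp
  also have "\<dots> = 2 ^ (2 * d) * (d choose i) ^ 2 * fact i * N ^ (2 * d - i - 2)"
  proof -
    have "2 * d - i - 2 = (d - 1) + (d - i - 1)" using id assms(4) by simp
    then have "N ^ (2 * d - i - 2) = N ^ (d - 1) * N ^ (d - i - 1)" by (simp add: power_add)
    moreover have "(2::nat) ^ (2 * d) = 2 ^ d * 2 ^ d" by (simp add: mult_2 power_add)
    ultimately show ?thesis by (simp add: power2_eq_square algebra_simps)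
  qed
  finally show ?thesis .
qed

end
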